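(* Let $\mathcal{X}\subseteq\mathbb{R}^2$ be compact. Then $\mathcal{X}$ is standard comonotone if and only if, for all $v\in\{e,-e\}$ and all $\pi\in\Pi_2=\{(1,2),(2,1)\}$, the problem $\max\{v^\top x: x\in\mathcal{X}\}$ admits an optimal solution $\bar x\in\mathcal{Z}(\pi)$.
   Context: $e=(1,1)^\top$. $\Pi_n$ is the set of permutations of $[n]$; for $\pi\in\Pi_n$, $\mathcal{Z}(\pi)=\{x\in\mathbb{R}^n: x_{\pi(1)}\ge\cdots\ge x_{\pi(n)}\}$. A set $\mathcal{X}\subseteq\mathbb{R}^n$ is standard comonotone if for every $\pi\in\Pi_n$ and every $v\in\mathcal{Z}(\pi)$, whenever $\max_{x\in\mathcal{X}}v^\top x$ attains its optimum, it has an optimal solution in $\mathcal{Z}(\pi)$. *)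

theory Defs
  imports "HOL-Analysis.Analysis"
begin

text \<open>Vectors in R^n are real^'n with a finite, linearly ordered index type 'n
  (the order playing the role of 1 < 2 < ... < n).\<close>

definition Zcone :: "('n::{finite,linorder} \<Rightarrow> 'n::{finite,linorder}) \<Rightarrow> (real^'n::{finite,linorder}) set" where
  "Zcone \<pi> = {x. \<forall>i j. i \<le> j \<longrightarrow> x $ (\<pi> j) \<le> x $ (\<pi> i)}"

definition is_max_sol :: "(real^'n::finite) set \<Rightarrow> real^'n::finite \<Rightarrow> real^'n::finite \<Rightarrow> bool" where
  "is_max_sol X v x \<longleftrightarrow> x \<in> X \<and> (\<forall>y\<in>X. v \<bullet> y \<le> v \<bullet> x)"

definition standard_comonotone :: "(real^'n::{finite,linorder}) set \<Rightarrow> bool" where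
  "standard_comonotone X \<longleftrightarrow>
     (\<forall>\<pi>. \<pi> permutes (UNIV :: 'n set) \<longrightarrow>
        (\<forall>v \<in> Zcone \<pi>. (\<exists>x. is_max_sol X v x) \<longrightarrow> (\<exists>x \<in> Zcone \<pi>. is_max_sol X v x)))"

end

theory Submission
  imports Defs
begin

lemma two_cases: "(i::2) = 1 \<or> i = 2"
  using exhaust_2 by blast

lemma le_2: "(2::2) \<le> 1" "\<not> (1::2) \<le> 2"
  by (simp_all add: less_eq_bit0_def bit0.Rep_0 bit0.Rep_1 bit0.Rep_numeral)

lemma Zcone_2:
  assumes "\<pi> permutes (UNIV :: 2 set)"
  shows "x \<in> Zcone \<pi> \<longleftrightarrow> x $ (\<pi> 1) \<le> x $ (\<pi> 2)"
proof
  assume "x \<in> Zcone \<pi>" then show "x $ (\<pi> 1) \<le> x $ (\<pi> 2)"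
    using le_2 by (auto simp: Zcone_def)
next
  assume h: "x $ (\<pi> 1) \<le> x $ (\<pi> 2)"
  show "x \<in> Zcone \<pi>" unfolding Zcone_def
  proof (intro CollectI allI impI)
    fix i j :: 2 assume "i \<le> j"
    then show "x $ \<pi> j \<le> x $ \<pi> i" using h le_2 two_cases[of i] two_cases[of j] by auto
  qed
qed

lemma inner_2:
  assumes "\<pi> permutes (UNIV :: 2 set)"
  shows "(v::real^2) \<bullet> x = v $ (\<pi> 1) * x $ (\<pi> 1) + v $ (\<pi> 2) * x $ (\<pi> 2)"
proof -
  have "v \<bullet> x = (\<Sum>i\<in>UNIV. v $ i * x $ i)" by (simp add: inner_vec_def)
  also have "\<dots> = (\<Sum>i\<in>UNIV. v $ \<pi> i * x $ \<pi> i)"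
    using sum.permute[OF assms, of "\<lambda>i. v $ i * x $ i"] by (simp add: comp_def)
  also have "\<dots> = v $ (\<pi> 1) * x $ (\<pi> 1) + v $ (\<pi> 2) * x $ (\<pi> 2)"
    by (simp add: UNIV_2)
  finally show ?thesis .
qed

theorem proposition1:
  fixes X :: "(real^2) set"
  assumes "compact X" and "X \<noteq> {}"
  shows "standard_comonotone X \<longleftrightarrow>
    (\<forall>v \<in> {1, -1}. \<forall>\<pi>. \<pi> permutes (UNIV :: 2 set) \<longrightarrow>
        (\<exists>x \<in> Zcone \<pi>. is_max_sol X v x))"
proof
  assume sc: "standard_comonotone X"
  show "\<forall>v \<in> {1, -1}. \<forall>\<pi>. \<pi> permutes (UNIV :: 2 set) \<longrightarrow> (\<exists>x \<in> Zcone \<pi>. is_max_sol X v x)"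
  proof (intro ballI allI impI)
    fix v :: "real^2" and \<pi> :: "2 \<Rightarrow> 2"
    assume v: "v \<in> {1, -1}" and p: "\<pi> permutes UNIV"
    have vz: "v \<in> Zcone \<pi>" using v p by (auto simp: Zcone_2)
    have "continuous_on X (\<lambda>y. v \<bullet> y)" by (intro continuous_intros)
    then obtain x where "x \<in> X" "\<forall>y\<in>X. v \<bullet> y \<le> v \<bullet> x"
      using continuous_attains_sup[OF assms(1) assms(2)] by blast
    then have "\<exists>x. is_max_sol X v x" by (auto simp: is_max_sol_def)
    then show "\<exists>x \<in> Zcone \<pi>. is_max_sol X v x"
      using sc p vz unfolding standard_comonotone_def by blast
  qed
next
  assume H: "\<forall>v \<in> {1, -1}. \<forall>\<pi>. \<pi> permutes (UNIV :: 2 set) \<longrightarrow> (\<exists>x \<in> Zcone \<pi>. is_max_sol X v x)"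
  show "standard_comonotone X" unfolding standard_comonotone_def
  proof (intro allI impI ballI)
    fix \<pi> :: "2 \<Rightarrow> 2" and v :: "real^2"
    assume p: "\<pi> permutes UNIV" and vz: "v \<in> Zcone \<pi>" and ex: "\<exists>x. is_max_sol X v x"
    define a where "a = \<pi> 2"
    define b where "b = \<pi> 1"
    have va: "v $ b \<le> v $ a" using vz p by (simp add: Zcone_2 a_def b_def)
    have ip: "\<And>w y. (w::real^2) \<bullet> y = w $ a * y $ a + w $ b * y $ b"
      using inner_2[OF p] a_def b_def by (simp add: add.commute)
    have zc: "\<And>y. y \<in> Zcone \<pi> \<longleftrightarrow> y $ b \<le> y $ a"
      using Zcone_2[OF p] a_def b_def by simp
    obtain x where x: "is_max_sol X v x" using ex by blast
    show "\<exists>x \<in> Zcone \<pi>. is_max_sol X v x"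
    proof (cases "x \<in> Zcone \<pi>")
      case True then show ?thesis using x by blast
    next
      case False
      then have xd: "x $ a < x $ b" using zc by fastforce
      obtain pp where pz: "pp \<in> Zcone \<pi>" and pm: "is_max_sol X 1 pp" using H p by auto
      obtain q where qz: "q \<in> Zcone \<pi>" and qm: "is_max_sol X (-1) q" using H p by auto
      have ps: "x $ a + x $ b \<le> pp $ a + pp $ b" using pm x
        unfolding is_max_sol_def by (simp add: ip)
      have qs: "q $ a + q $ b \<le> x $ a + x $ b" using qm x
        unfolding is_max_sol_def ip by (auto simp: algebra_simps)
      have pd: "pp $ b \<le> pp $ a" using pz zc by blast
      have qd: "q $ b \<le> q $ a" using qz zc by blast
      have key: "\<And>y. 2 * (v \<bullet> y) = (v $ a + v $ b) * (y $ a + y $ b) + (v $ a - v $ b) * (y $ a - y $ b)"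
        by (simp add: ip algebra_simps)
      show ?thesis
      proof (cases "v $ a + v $ b \<ge> 0")
        case True
        have "(v $ a + v $ b) * (x $ a + x $ b) \<le> (v $ a + v $ b) * (pp $ a + pp $ b)"
          using True ps by (simp add: mult_left_mono)
        moreover have "(v $ a - v $ b) * (x $ a - x $ b) \<le> (v $ a - v $ b) * (pp $ a - pp $ b)"
          using va xd pd by (intro mult_left_mono) auto
        ultimately have "v \<bullet> x \<le> v \<bullet> pp" using key[of x] key[of pp] by linarith
        then have "is_max_sol X v pp" using x pm unfolding is_max_sol_def by force
        then show ?thesis using pz by blast
      next
        case False
        have "(v $ a + v $ b) * (x $ a + x $ b) \<le> (v $ a + v $ b) * (q $ a + q $ b)"
          using False qs by (simp add: mult_left_mono_neg)
        moreover have "(v $ a - v $ b) * (x $ a - x $ b) \<le> (v $ a - v $ b) * (q $ a - q $ b)"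
          using va xd qd by (intro mult_left_mono) auto
        ultimately have "v \<bullet> x \<le> v \<bullet> q" using key[of x] key[of q] by linarith
        then have "is_max_sol X v q" using x qm unfolding is_max_sol_def by force
        then show ?thesis using qz by blast
      qed
    qed
  qed
qed

end
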